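(* Let $Y_1,Y_2,\ldots$ be i.i.d. $N(\mu,\sigma_0^2)$ with known $\sigma_0^2>0$, let $\bar Y_n$ be the sample mean of the first $n$ observations, and for $0<\alpha<1$ let $z_{1-\alpha/2}$ be the $(1-\alpha/2)$-quantile of the standard normal distribution, $\Phi$ its distribution function. For integers $n,m\ge1$, the probability that the intervals $\bar Y_n\pm\sigma_0 z_{1-\alpha/2}/\sqrt n$ and $\bar Y_{n+m}\pm\sigma_0 z_{1-\alpha/2}/\sqrt{n+m}$ are disjoint equals $$2\Phi\Big(-z_{1-\alpha/2}\Big(\sqrt{1+\tfrac nm}+\sqrt{\tfrac nm}\Big)\Big)>0 .$$ *)

theory Defs
  imports "HOL-Probability.Probability"
begin

definition Phi :: "real \<Rightarrow> real" where
  "Phi x = measure (density lborel std_normal_density) {..x}"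

definition std_normal_quantile :: "real \<Rightarrow> real" where
  "std_normal_quantile p = (THE z. Phi z = p)"

definition sample_mean :: "(nat \<Rightarrow> 'a \<Rightarrow> real) \<Rightarrow> nat \<Rightarrow> 'a \<Rightarrow> real" where
  "sample_mean Y n \<omega> = (\<Sum>i<n. Y i \<omega>) / real n"

end

theory Submission imports Defs "HOL-Probability.Distribution_Functions" begin


abbreviation "NN \<equiv> density lborel (\<lambda>x. ennreal (std_normal_density x))"

lemma NN_real: "real_distribution NN"
  unfolding real_distribution_def real_distribution_axioms_def
  using prob_space_normal_density by auto

lemma Phi_cdf: "Phi = cdf NN"
  by (auto simp: Phi_def cdf_def2 fun_eq_iff)

lemma NN_point: "measure NN {x} = 0"
proof -
  have "emeasure NN {x} = 0"
    by (subst emeasure_density) (auto intro!: nn_integral_null_set)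
  then show ?thesis by (simp add: measure_def)
qed

lemma std_ne0[simp]: "std_normal_density x \<noteq> 0"
  using normal_density_pos[of 1 0 x] by simp

lemma NN_Ioc_pos: assumes "a < b" shows "measure NN {a<..b} > 0"
proof -
  have "emeasure NN {a<..b} \<noteq> 0"
  proof
    assume "emeasure NN {a<..b} = 0"
    then have "(\<integral>\<^sup>+x. ennreal (std_normal_density x) * indicator {a<..b} x \<partial>lborel) = 0"
      by (subst (asm) emeasure_density) auto
    then have "AE x in lborel. ennreal (std_normal_density x) * indicator {a<..b} x = 0"
      by (subst (asm) nn_integral_0_iff_AE) auto
    then have "AE x in lborel. x \<notin> {a<..b}"
      by (rule AE_mp) (rule AE_I2, auto simp: std_ne0 split: split_indicator)
    then have "emeasure lborel {a<..b} = 0"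
      by (subst (asm) AE_iff_measurable[OF _ refl]) (auto simp: greaterThanAtMost_def greaterThan_def atMost_def Int_def)
    then show False using assms by simp
  qed
  moreover have "emeasure NN {a<..b} \<noteq> \<top>"
    using finite_measure.emeasure_finite[OF prob_space.finite_measure[OF prob_space_normal_density]] by auto
  ultimately show ?thesis
    by (simp add: measure_def enn2real_positive_iff zero_less_iff_neq_zero top.not_eq_extremum)
qed

lemma Phi_strict_mono: "a < b \<Longrightarrow> Phi a < Phi b"
  using finite_borel_measure.cdf_diff_eq[OF real_distribution.finite_borel_measure_M[OF NN_real], of a b]
    NN_Ioc_pos[of a b] unfolding Phi_cdf by linarith

lemma Phi_cont: "isCont Phi x"
  unfolding Phi_cdf
  by (subst finite_borel_measure.isCont_cdf[OF real_distribution.finite_borel_measure_M[OF NN_real]])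
     (rule NN_point)

lemma Phi_pos: "Phi x > 0"
proof -
  have "Phi (x-1) \<ge> 0" unfolding Phi_cdf
    by (rule finite_borel_measure.cdf_nonneg[OF real_distribution.finite_borel_measure_M[OF NN_real]])
  with Phi_strict_mono[of "x-1" x] show ?thesis by simp
qed

lemma NN_sym: "measure NN {k<..} = measure NN {..<-k}"
proof -
  interpret P: prob_space NN using NN_real by (simp add: real_distribution_def)
  have d: "distributed NN lborel (\<lambda>x. x) (\<lambda>x. ennreal (std_normal_density x))"
    unfolding distributed_def by (auto simp: distr_id2)
  have "distributed NN lborel (\<lambda>x. 0 + (-1) * x) (\<lambda>x. ennreal (normal_density (0 + (-1) * 0) (\<bar>-1\<bar> * 1) x))"
    by (rule P.normal_density_affine[OF d]) auto
  then have "distributed NN lborel (\<lambda>x. - x) (\<lambda>x. ennreal (std_normal_density x))" by simp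
  then have e: "distr NN lborel (\<lambda>x. - x) = NN"
    unfolding distributed_def by simp
  have "measure NN {k<..} = measure (distr NN lborel (\<lambda>x. - x)) {k<..}" by (simp add: e)
  also have "\<dots> = measure NN ((\<lambda>x. - x) -` {k<..} \<inter> space NN)"
    by (rule measure_distr) auto
  also have "(\<lambda>x. - x) -` {k<..} \<inter> space NN = {..<-k}" by auto
  finally show ?thesis .
qed

lemma Phi_0: "Phi 0 = 1/2"
proof -
  interpret P: prob_space NN using NN_real by (simp add: real_distribution_def)
  have u1: "measure NN ({..<0} \<union> {0}) = measure NN {..<0} + measure NN {0::real}"
    by (rule P.finite_measure_Union) auto
  have u2: "measure NN (({..<0} \<union> {0}) \<union> {0<..}) = measure NN ({..<0} \<union> {0::real}) + measure NN {0<..}"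
    by (rule P.finite_measure_Union) auto
  have e1: "{..0} \<union> {0<..} = (UNIV::real set)" by auto
  have e2: "{..<0} \<union> {0} = {..(0::real)}" by auto
  show ?thesis using u1 u2 NN_sym[of 0] NN_point[of 0] P.prob_space
    unfolding e2 e1 by (simp add: Phi_def)
qed

lemma Phi_lim_top: "(Phi \<longlongrightarrow> 1) at_top"
  unfolding Phi_cdf by (rule real_distribution.cdf_lim_at_top_prob[OF NN_real])

lemma Phi_lim_bot: "(Phi \<longlongrightarrow> 0) at_bot"
  unfolding Phi_cdf
  by (rule finite_borel_measure.cdf_lim_at_bot[OF real_distribution.finite_borel_measure_M[OF NN_real]])

lemma Phi_quantile: assumes "0 < p" "p < 1" shows "Phi (std_normal_quantile p) = p"
proof -
  have "eventually (\<lambda>x. Phi x < p) at_bot"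
    using order_tendstoD(2)[OF Phi_lim_bot assms(1)] .
  then obtain a where a: "Phi a < p" by (auto simp: eventually_at_bot_linorder)
  have "eventually (\<lambda>x. Phi x > p) at_top"
    using order_tendstoD(1)[OF Phi_lim_top assms(2)] .
  then obtain b where b: "Phi b > p" by (auto simp: eventually_at_top_linorder)
  have "a \<le> b" using a b Phi_strict_mono[of b a] by (cases "a \<le> b") auto
  then obtain z where z: "Phi z = p"
    using IVT[of Phi a p b] a b Phi_cont by auto
  have "std_normal_quantile p = z"
    unfolding std_normal_quantile_def
  proof (rule the_equality)
    show "Phi z = p" by (rule z)
    fix y assume "Phi y = p" then show "y = z"
      using z Phi_strict_mono[of y z] Phi_strict_mono[of z y] by (cases y z rule: linorder_cases) auto
  qed
  with z show ?thesis by simp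
qed

lemma quantile_pos: assumes "1/2 < p" "p < 1" shows "std_normal_quantile p > 0"
proof (rule ccontr)
  assume "\<not> ?thesis"
  then have "Phi (std_normal_quantile p) \<le> Phi 0"
    using Phi_strict_mono[of "std_normal_quantile p" 0] by (cases "std_normal_quantile p = 0") auto
  with Phi_quantile[of p] assms Phi_0 show False by simp
qed



lemma sum_split_nm: "(\<Sum>i<n+m. f i) = (\<Sum>i<n. f i) + (\<Sum>i\<in>{n..<n+m}. f (i::nat))"
  by (metis add.commute le_add2 lessThan_atLeast0 sum.atLeastLessThan_concat zero_le)

lemma sum_if_nm: "(\<Sum>i<n+m. if i < n then a else b) = real n * a + real m * (b::real)"
proof -
  have "(\<Sum>i<n+m. if i < n then a else b) = (\<Sum>i<n. if i < n then a else b) + (\<Sum>i\<in>{n..<n+m}. if i < n then a else b)"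
    by (rule sum_split_nm)
  also have "\<dots> = (\<Sum>i<n. a) + (\<Sum>i\<in>{n..<n+m}. b)"
    by (intro arg_cong2[where f="(+)"] sum.cong) auto
  finally show ?thesis by simp
qed

lemma intervals_disjoint:
  fixes x y r1 r2 :: real
  assumes "r1 \<ge> 0" "r2 \<ge> 0"
  shows "({x-r1..x+r1} \<inter> {y-r2..y+r2} = {}) \<longleftrightarrow> \<bar>x-y\<bar> > r1+r2"
proof
  assume h: "{x-r1..x+r1} \<inter> {y-r2..y+r2} = {}"
  show "\<bar>x-y\<bar> > r1+r2"
  proof (rule ccontr)
    assume c: "\<not> ?thesis"
    show False
    proof (cases "x \<le> y")
      case True
      have "max x (y-r2) \<in> {x-r1..x+r1} \<inter> {y-r2..y+r2}" using True c assms by auto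
      with h show False by auto
    next
      case False
      have "max y (x-r1) \<in> {x-r1..x+r1} \<inter> {y-r2..y+r2}" using False c assms by auto
      with h show False by auto
    qed
  qed
next
  assume "\<bar>x-y\<bar> > r1+r2" then show "{x-r1..x+r1} \<inter> {y-r2..y+r2} = {}" by auto
qed

lemma NN_abs: assumes "k \<ge> 0" shows "measure NN {x. \<bar>x\<bar> > k} = 2 * Phi (-k)"
proof -
  interpret P: prob_space NN using NN_real by (simp add: real_distribution_def)
  have e: "{x. \<bar>x\<bar> > k} = {..<-k} \<union> {k<..}" using assms by auto
  have "measure NN ({..<-k} \<union> {k<..}) = measure NN {..<-k} + measure NN {k<..}"
    by (rule P.finite_measure_Union) (use assms in auto)
  moreover have "measure NN ({..<-k} \<union> {-k}) = measure NN {..<-k} + measure NN {-k}"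
    by (rule P.finite_measure_Union) auto
  moreover have "{..<-k} \<union> {-k} = {..-k}" by auto
  ultimately show ?thesis using NN_sym[of k] NN_point[of "-k"] e by (simp add: Phi_def)
qed

lemma L1: "(x::real) > 0 \<Longrightarrow> y > 0 \<Longrightarrow> x * (1/x - 1/(x+y)) + y * (-1/(x+y)) = 0"
proof -
  assume a: "x > 0" "y > 0"
  then have h: "x + y \<noteq> 0" "x \<noteq> 0" by auto
  have 1: "x * (1/x - 1/(x+y)) = 1 - x/(x+y)" using h by (simp add: right_diff_distrib)
  have 2: "y * (-1/(x+y)) = - (y/(x+y))" by simp
  have 3: "x/(x+y) + y/(x+y) = 1" using h by (simp add: add_divide_distrib[symmetric])
  show ?thesis using 1 2 3 by linarith
qed
lemma L2: "(x::real) > 0 \<Longrightarrow> y > 0 \<Longrightarrow> x * ((1/x - 1/(x+y))\<^sup>2 * s) + y * ((-1/(x+y))\<^sup>2 * s) = s * (y / (x * (x+y)))"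
proof -
  assume a: "x > 0" "y > 0"
  define u where "u = x + y"
  have u: "u > 0" "y = u - x" using a unfolding u_def by auto
  have "x * ((1/x - 1/u)\<^sup>2 * s) + (u - x) * ((-1/u)\<^sup>2 * s) = s * ((u - x) / (x * u))"
    using a u by (simp add: field_simps power2_eq_square)
  then show ?thesis using u unfolding u_def by simp
qed
lemma L3: assumes "(x::real) > 0" "y > 0" "s > 0"
  shows "(s * z / sqrt x + s * z / sqrt (x+y)) / (s * sqrt y / (sqrt x * sqrt (x+y))) = z * (sqrt (1 + x/y) + sqrt (x/y))"
proof -
  have e1: "sqrt (1 + x/y) = sqrt (x+y) / sqrt y"
    using assms by (simp add: real_sqrt_divide[symmetric] field_simps)
  have e2: "sqrt (x/y) = sqrt x / sqrt y"
    by (simp add: real_sqrt_divide)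
  have p: "sqrt x > 0" "sqrt y > 0" "sqrt (x+y) > 0" using assms by auto
  show ?thesis unfolding e1 e2 using assms p
    by (simp add: field_simps)
qed
lemma L4: "(x::real) > 0 \<Longrightarrow> y > 0 \<Longrightarrow> s > 0 \<Longrightarrow> sqrt (s\<^sup>2 * (y / (x * (x+y)))) = s * sqrt y / (sqrt x * sqrt (x+y))"
  by (simp add: real_sqrt_mult real_sqrt_divide)



theorem mainTheorem4:
  fixes M :: "'a measure" and Y :: "nat \<Rightarrow> 'a \<Rightarrow> real"
    and \<mu> \<sigma>\<^sub>0 \<alpha> :: real and n m :: nat
  assumes "prob_space M"
    and "prob_space.indep_vars M (\<lambda>_. borel) Y UNIV"
    and "\<And>i. distributed M lborel (Y i) (normal_density \<mu> \<sigma>\<^sub>0)"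
    and "\<sigma>\<^sub>0 > 0"
    and "0 < \<alpha>" and "\<alpha> < 1"
    and "n \<ge> 1" and "m \<ge> 1"
  shows "measure M {\<omega> \<in> space M.
            {sample_mean Y n \<omega> - \<sigma>\<^sub>0 * std_normal_quantile (1 - \<alpha>/2) / sqrt (real n) ..
             sample_mean Y n \<omega> + \<sigma>\<^sub>0 * std_normal_quantile (1 - \<alpha>/2) / sqrt (real n)}
          \<inter> {sample_mean Y (n + m) \<omega> - \<sigma>\<^sub>0 * std_normal_quantile (1 - \<alpha>/2) / sqrt (real (n + m)) ..
             sample_mean Y (n + m) \<omega> + \<sigma>\<^sub>0 * std_normal_quantile (1 - \<alpha>/2) / sqrt (real (n + m))}
          = {}}
        = 2 * Phi (- std_normal_quantile (1 - \<alpha>/2) * (sqrt (1 + real n / real m) + sqrt (real n / real m)))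
      \<and> 2 * Phi (- std_normal_quantile (1 - \<alpha>/2) * (sqrt (1 + real n / real m) + sqrt (real n / real m))) > 0"
proof -
  interpret prob_space M by fact
  define z where "z = std_normal_quantile (1 - \<alpha>/2)"
  have z: "z > 0" unfolding z_def by (rule quantile_pos) (use assms in auto)
  have nn: "real n > 0" "real m > 0" "real n + real m > 0" "real m + real n > 0"
    using assms by auto
  define a :: real where "a = 1 / real n - 1 / real (n+m)"
  define b :: real where "b = - 1 / real (n+m)"
  define c where "c i = (if i < n then a else b)" for i
  have pp0: "0 < real m * real n + real n * real n" using assms
    by (intro add_pos_pos mult_pos_pos) auto
  then have pp: "real m * real n + real n * real n \<noteq> 0" by simp
  have nz: "c i \<noteq> 0" for i
    using assms pp by (auto simp: c_def a_def b_def field_simps)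
  define D where "D \<omega> = (\<Sum>i<n+m. c i * Y i \<omega>)" for \<omega>
  have Deq: "D \<omega> = sample_mean Y n \<omega> - sample_mean Y (n + m) \<omega>" for \<omega>
  proof -
    define A where "A = (\<Sum>i<n. Y i \<omega>)"
    define B where "B = (\<Sum>i\<in>{n..<n+m}. Y i \<omega>)"
    have "D \<omega> = (\<Sum>i<n. c i * Y i \<omega>) + (\<Sum>i\<in>{n..<n+m}. c i * Y i \<omega>)"
      unfolding D_def by (rule sum_split_nm)
    also have "\<dots> = a * A + b * B"
      unfolding A_def B_def sum_distrib_left c_def
      by (intro arg_cong2[where f="(+)"] sum.cong) auto
    finally have 1: "D \<omega> = a * A + b * B" .
    have 2: "(\<Sum>i<n+m. Y i \<omega>) = A + B" unfolding A_def B_def by (rule sum_split_nm)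
    have "sample_mean Y n \<omega> - sample_mean Y (n + m) \<omega> = A / real n - (A + B) / (real n + real m)"
      unfolding sample_mean_def A_def[symmetric] 2 by simp
    also have "\<dots> = a * A + b * B" unfolding a_def b_def by (simp add: algebra_simps add_divide_distrib)
    finally show ?thesis using 1 by metis
  qed
  define s where "s = sqrt (\<Sum>i<n+m. (\<bar>c i\<bar> * \<sigma>\<^sub>0)\<^sup>2)"
  have sc: "(\<Sum>i<n+m. c i) = 0"
  proof -
    have "(\<Sum>i<n+m. c i) = real n * a + real m * b" unfolding c_def by (rule sum_if_nm)
    also have "\<dots> = 0" unfolding a_def b_def of_nat_add using L1[OF nn(1,2)] by simp
    finally show ?thesis .
  qed
  have sc2: "(\<Sum>i<n+m. (\<bar>c i\<bar> * \<sigma>\<^sub>0)\<^sup>2) = \<sigma>\<^sub>0\<^sup>2 * (real m / (real n * real (n+m)))"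
  proof -
    have "(\<Sum>i<n+m. (\<bar>c i\<bar> * \<sigma>\<^sub>0)\<^sup>2) = (\<Sum>i<n+m. if i < n then a\<^sup>2 * \<sigma>\<^sub>0\<^sup>2 else b\<^sup>2 * \<sigma>\<^sub>0\<^sup>2)"
      by (rule sum.cong) (auto simp: c_def power_mult_distrib)
    also have "\<dots> = real n * (a\<^sup>2 * \<sigma>\<^sub>0\<^sup>2) + real m * (b\<^sup>2 * \<sigma>\<^sub>0\<^sup>2)" by (rule sum_if_nm)
    also have "\<dots> = \<sigma>\<^sub>0\<^sup>2 * (real m / (real n * real (n+m)))"
      unfolding a_def b_def of_nat_add using L2[OF nn(1,2), of "\<sigma>\<^sub>0\<^sup>2"] by simp
    finally show ?thesis .
  qed
  have ind: "indep_vars (\<lambda>_. borel) (\<lambda>i \<omega>. c i * Y i \<omega>) {..<n+m}"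
    using indep_vars_compose2[OF indep_vars_subset[OF assms(2)], of "{..<n+m}" "\<lambda>i x. c i * x" "\<lambda>_. borel"]
    by auto
  have distD: "distributed M lborel D (normal_density (\<Sum>i<n+m. c i * \<mu>) s)"
    unfolding D_def s_def
  proof (rule sum_indep_normal[OF _ _ ind])
    fix i assume "i \<in> {..<n+m}"
    show "0 < \<bar>c i\<bar> * \<sigma>\<^sub>0" using nz[of i] assms by auto
    show "distributed M lborel (\<lambda>\<omega>. c i * Y i \<omega>) (normal_density (c i * \<mu>) (\<bar>c i\<bar> * \<sigma>\<^sub>0))"
      using normal_density_affine[OF assms(3)[of i] assms(4) nz[of i], of 0] by simp
  qed (use assms in auto)
  have "(\<Sum>i<n+m. c i * \<mu>) = 0" using sc by (simp add: sum_distrib_right[symmetric])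
  then have distD': "distributed M lborel D (normal_density 0 s)" using distD by simp
  have s_eq: "s = \<sigma>\<^sub>0 * sqrt (real m) / (sqrt (real n) * sqrt (real (n+m)))"
    unfolding s_def sc2 of_nat_add using L4[OF nn(1,2) assms(4)] by simp
  have spos: "s > 0" unfolding s_eq using assms by auto
  define Z where "Z \<omega> = (D \<omega> - 0) / s" for \<omega>
  have distZ: "distributed M lborel Z std_normal_density"
    using normal_standard_normal_convert[OF spos, of D 0] distD' unfolding Z_def by simp
  define r1 where "r1 = \<sigma>\<^sub>0 * z / sqrt (real n)"
  define r2 where "r2 = \<sigma>\<^sub>0 * z / sqrt (real (n+m))"
  define k where "k = z * (sqrt (1 + real n / real m) + sqrt (real n / real m))"
  have r: "r1 \<ge> 0" "r2 \<ge> 0" unfolding r1_def r2_def using z assms by auto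
  have k_eq: "(r1 + r2) / s = k"
    unfolding r1_def r2_def s_eq k_def of_nat_add using L3[OF nn(1,2) assms(4), of z] by simp
  have kpos: "k \<ge> 0" unfolding k_def using z by auto
  have mZ: "Z \<in> borel_measurable M" using distZ by (simp add: distributed_def)
  have set_eq: "{\<omega> \<in> space M.
            {sample_mean Y n \<omega> - \<sigma>\<^sub>0 * z / sqrt (real n) ..
             sample_mean Y n \<omega> + \<sigma>\<^sub>0 * z / sqrt (real n)}
          \<inter> {sample_mean Y (n + m) \<omega> - \<sigma>\<^sub>0 * z / sqrt (real (n + m)) ..
             sample_mean Y (n + m) \<omega> + \<sigma>\<^sub>0 * z / sqrt (real (n + m))}
          = {}} = Z -` {x. \<bar>x\<bar> > k} \<inter> space M"
  proof -
    have "\<bar>D \<omega>\<bar> > r1 + r2 \<longleftrightarrow> \<bar>Z \<omega>\<bar> > k" for \<omega>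
    proof -
      have "\<bar>Z \<omega>\<bar> = \<bar>D \<omega>\<bar> / s" unfolding Z_def using spos by simp
      then show ?thesis using spos k_eq[symmetric] by (simp add: divide_less_cancel)
    qed
    then show ?thesis
      using intervals_disjoint[OF r, of "sample_mean Y n _" "sample_mean Y (n + m) _"]
      unfolding r1_def r2_def Deq by auto
  qed
  have "measure M (Z -` {x. \<bar>x\<bar> > k} \<inter> space M) = measure (distr M lborel Z) {x. \<bar>x\<bar> > k}"
    by (rule measure_distr[symmetric]) (use mZ in auto)
  also have "distr M lborel Z = NN" using distZ by (simp add: distributed_def)
  also have "measure NN {x. \<bar>x\<bar> > k} = 2 * Phi (-k)" by (rule NN_abs[OF kpos])
  finally have "measure M (Z -` {x. \<bar>x\<bar> > k} \<inter> space M) = 2 * Phi (-k)" .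
  then show ?thesis using set_eq Phi_pos[of "-k"] unfolding z_def k_def by simp
qed

end
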